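(* Under the Standing Setup (see context), let $\{x^k\}$ be the sequence generated by Algorithm 1 and let $f^*:=\inf_{x\in B[\bar x,\beta]}f(x)$. Then $\{f(x^k)\}$ converges to $f^*$, and $\{x^k\}$ converges to a point $x^*$ with $f(x^* )=f^*$.
   Context: $B(x,r)$, $B[x,r]$: open and closed Euclidean balls. For $\mu>0$: $e_\mu f(x):=\min_y\{f(y)+\frac{1}{2\mu}\|y-x\|^2\}$ (Moreau envelope), $P_\mu f(x):=\operatorname{argmin}_y\{f(y)+\frac{1}{2\mu}\|y-x\|^2\}$ (proximal operator). $\partial f$: limiting subdifferential. $f$ is $\rho$-weakly convex on $U$ if $f(\alpha x+(1-\alpha)y)\le \alpha f(x)+(1-\alpha)f(y)+\frac{\rho\alpha(1-\alpha)}{2}\|x-y\|^2$ for all $x,y\in U$, $\alpha\in[0,1]$. Standing Fact (cited): if $f$ is $\rho$-weakly convex on $\mathbb{R}^n$, $\rho>0$, $0\in\partial f(\bar x)$ and $\mu\in(0,1/\rho)$, there is $\alpha>0$ such that on $B[\bar x,\alpha]$, $P_\mu f$ is single-valued, $1/(1-\mu\rho)$-Lipschitz, equal to $(I+\mu\partial f)^{-1}$, and $e_\mu f$ is $C^1$ with $\nabla e_\mu f(x)=\mu^{-1}(x-P_\mu f(x))$. Standing Setup: $f:\mathbb{R}^n\to\mathbb{R}\cup\{+\infty\}$ is proper, lower semicontinuous, bounded below and $\rho$-weakly convex on $\mathbb{R}^n$, $\rho>0$; $\bar x\in\operatorname{dom}f$ with $0\in\partial f(\bar x)$. Fix $\bar\lambda>0$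 and bounded sequences $\{\gamma_k\},\{\lambda_k\}$ with $0<\bar\lambda<2\gamma_k<\lambda_k<1/\rho$ for all $k$. Let $\delta>0$ be such that, for every $k$, the Standing Fact holds on $B[\bar x,\delta]$ for $\mu=\gamma_k$ and $\mu=\lambda_k$, and (Assumption 1) the Moreau envelopes $e_{\gamma_k}f$ and $e_{\lambda_k}f$ are convex on $B[\bar x,\delta]$. For each $k$ let $L_k:=1+\frac{\lambda_k-\gamma_k}{\gamma_k}\bigl(1+\frac{1}{1-\gamma_k\rho}\bigr)$, pick $\sigma_k\in(0,2/L_k^2)$, set $\kappa_k:=1-2\sigma_k+\sigma_k^2L_k^2$, and let $\beta>0$ satisfy $\beta<\min\{\delta,\frac{\delta}{\sigma_k}(1-\sqrt{\kappa_k})\}$ for all $k$. Algorithm 1: choose $x^0\in B[\bar x,\beta]$. Given $x^k\in B[\bar x,\beta]$: (a) compute $z^k\in B(\bar x,\delta)$ with $z^k=x^k-(\lambda_k-\gamma_k)\nabla e_{\gamma_k}f(z^k)$; (b) set $x^{k+1}=z^k-\gamma_k(\lambda_k-\gamma_k)^{-1}(x^k-z^k)$. *)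

theory Defs
  imports "HOL-Analysis.Analysis"
begin

text \<open>Extended-real valued functions f : R^n -> R \<union> {+\<infinity>} are modelled as
  functions into ereal that never take the value -\<infinity>.\<close>

definition proper_fun :: "('a \<Rightarrow> ereal) \<Rightarrow> bool" where
  "proper_fun f \<longleftrightarrow> (\<forall>x. f x \<noteq> -\<infinity>) \<and> (\<exists>x. f x \<noteq> \<infinity>)"

definition lsc_fun :: "('a::topological_space \<Rightarrow> ereal) \<Rightarrow> bool" where
  "lsc_fun f \<longleftrightarrow> (\<forall>x. \<forall>c. c < f x \<longrightarrow> eventually (\<lambda>y. c < f y) (at x))"

definition edom :: "('a \<Rightarrow> ereal) \<Rightarrow> 'a set" where
  "edom f = {x. f x < \<infinity>}"

text \<open>rho-weak convexity on a set U (ereal arithmetic, with 0 * \<infinity> = 0).\<close>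
definition weakly_convex_on :: "'a::real_normed_vector set \<Rightarrow> real \<Rightarrow> ('a \<Rightarrow> ereal) \<Rightarrow> bool" where
  "weakly_convex_on U \<rho> f \<longleftrightarrow>
     (\<forall>x\<in>U. \<forall>y\<in>U. \<forall>\<alpha>::real. 0 \<le> \<alpha> \<and> \<alpha> \<le> 1 \<longrightarrow>
        f (\<alpha> *\<^sub>R x + (1 - \<alpha>) *\<^sub>R y)
          \<le> ereal \<alpha> * f x + ereal (1 - \<alpha>) * f y
             + ereal (\<rho> * \<alpha> * (1 - \<alpha>) / 2 * (norm (x - y))\<^sup>2))"

definition frechet_subdiff :: "('a::real_inner \<Rightarrow> ereal) \<Rightarrow> 'a \<Rightarrow> 'a set" where
  "frechet_subdiff f x = {v. \<bar>f x\<bar> \<noteq> \<infinity> \<and>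
      (\<forall>\<epsilon>>0. \<exists>d>0. \<forall>y\<in>ball x d.
          ereal (real_of_ereal (f x) + inner v (y - x) - \<epsilon> * norm (y - x)) \<le> f y)}"

definition limiting_subdiff :: "('a::real_inner \<Rightarrow> ereal) \<Rightarrow> 'a \<Rightarrow> 'a set" where
  "limiting_subdiff f x = {v. \<exists>xs vs. xs \<longlonglongrightarrow> x \<and> (\<lambda>k. f (xs k)) \<longlonglongrightarrow> f x \<and>
      (\<forall>k. vs k \<in> frechet_subdiff f (xs k)) \<and> vs \<longlonglongrightarrow> v}"

definition moreau_env :: "('a::real_normed_vector \<Rightarrow> ereal) \<Rightarrow> real \<Rightarrow> 'a \<Rightarrow> ereal" where
  "moreau_env f \<mu> x = (INF y. f y + ereal ((norm (y - x))\<^sup>2 / (2 * \<mu>)))"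

definition prox :: "('a::real_normed_vector \<Rightarrow> ereal) \<Rightarrow> real \<Rightarrow> 'a \<Rightarrow> 'a set" where
  "prox f \<mu> x = {y. \<forall>z. f y + ereal ((norm (y - x))\<^sup>2 / (2 * \<mu>))
                        \<le> f z + ereal ((norm (z - x))\<^sup>2 / (2 * \<mu>))}"

text \<open>Real-valued version of the Moreau envelope (it is finite when f is proper and bounded below).\<close>
definition menv :: "('a::real_normed_vector \<Rightarrow> ereal) \<Rightarrow> real \<Rightarrow> 'a \<Rightarrow> real" where
  "menv f \<mu> x = real_of_ereal (moreau_env f \<mu> x)"

text \<open>The conclusions of the Standing Fact for parameter mu on the closed ball cball xbar a:
  P_mu f single-valued, 1/(1 - mu rho)-Lipschitz, equal to (I + mu \<partial>f)^{-1},
  e_mu f is C^1 with gradient mu^{-1}(x - P_mu f(x)).\<close>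
definition standing_fact_on :: "('a::euclidean_space \<Rightarrow> ereal) \<Rightarrow> real \<Rightarrow> real \<Rightarrow> 'a \<Rightarrow> real \<Rightarrow> bool" where
  "standing_fact_on f \<rho> \<mu> xbar a \<longleftrightarrow>
     (\<exists>P. (\<forall>x\<in>cball xbar a. prox f \<mu> x = {P x})
        \<and> (\<forall>x\<in>cball xbar a. \<forall>y\<in>cball xbar a. dist (P x) (P y) \<le> (1 / (1 - \<mu> * \<rho>)) * dist x y)
        \<and> (\<forall>x\<in>cball xbar a. prox f \<mu> x = {p. (1 / \<mu>) *\<^sub>R (x - p) \<in> limiting_subdiff f p})
        \<and> (\<forall>x\<in>cball xbar a. GDERIV (menv f \<mu>) x :> (1 / \<mu>) *\<^sub>R (x - P x))
        \<and> continuous_on (cball xbar a) (\<lambda>x. (1 / \<mu>) *\<^sub>R (x - P x)))"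

end

theory Submission imports Defs begin

lemma tangent_ineq:
  fixes h :: "'a::real_inner \<Rightarrow> real"
  assumes cv: "convex_on S h" and a: "a \<in> S" and b: "b \<in> S"
    and d: "(h has_derivative (\<lambda>u. inner u g)) (at a)"
  shows "h a + inner (b - a) g \<le> h b"
proof -
  define dd where "dd = b - a"
  define \<phi> where "\<phi> = (\<lambda>t::real. h (a + t *\<^sub>R dd))"
  have lin: "((\<lambda>t::real. a + t *\<^sub>R dd) has_derivative (\<lambda>s. s *\<^sub>R dd)) (at 0)"
    by (auto intro!: derivative_eq_intros)
  have d0: "(h has_derivative (\<lambda>u. inner u g)) (at (a + 0 *\<^sub>R dd))" using d by simp
  have "(\<phi> has_derivative (\<lambda>s. inner (s *\<^sub>R dd) g)) (at 0)"
    unfolding \<phi>_def using has_derivative_compose[OF lin d0] by (simp add: o_def)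
  hence "(\<phi> has_field_derivative inner dd g) (at 0)"
    by (simp add: has_field_derivative_def mult.commute[of _ "inner dd g"])
  hence lim: "((\<lambda>y. (\<phi> y - \<phi> 0) / (y - 0)) \<longlongrightarrow> inner dd g) (at 0)"
    using has_field_derivative_iff by blast
  hence lim2: "((\<lambda>y. (\<phi> y - \<phi> 0) / (y - 0)) \<longlongrightarrow> inner dd g) (at_right 0)"
    by (metis filterlim_at_split)
  have ev: "eventually (\<lambda>y. (\<phi> y - \<phi> 0) / (y - 0) \<le> h b - h a) (at_right (0::real))"
  proof -
    have "eventually (\<lambda>y::real. y \<in> {0<..<1}) (at_right 0)"
      using eventually_at_right_real[of 0 1] by simp
    thus ?thesis
    proof eventually_elim
      case (elim t)
      hence t: "0 < t" "t < 1" by auto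
      have "h ((1 - t) *\<^sub>R a + t *\<^sub>R b) \<le> (1 - t) * h a + t * h b"
        using convex_onD[OF cv, of t a b] t a b by simp
      moreover have "(1 - t) *\<^sub>R a + t *\<^sub>R b = a + t *\<^sub>R dd"
        by (simp add: dd_def algebra_simps)
      ultimately have "\<phi> t - \<phi> 0 \<le> t * (h b - h a)"
        by (simp add: \<phi>_def algebra_simps)
      thus ?case using t by (simp add: divide_simps mult.commute)
    qed
  qed
  have "inner dd g \<le> h b - h a"
    by (rule tendsto_upperbound[OF lim2 ev]) simp
  thus ?thesis by (simp add: dd_def)
qed

lemma sf_point:
  assumes "standing_fact_on f \<rho> \<mu> c r" "x \<in> cball c r"
  shows "\<exists>p. prox f \<mu> x = {p} \<and> GDERIV (menv f \<mu>) x :> (1/\<mu>) *\<^sub>R (x - p)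
     \<and> prox f \<mu> x = {q. (1/\<mu>) *\<^sub>R (x - q) \<in> limiting_subdiff f q}"
  using assms unfolding standing_fact_on_def by blast

lemma sf_lip:
  assumes "standing_fact_on f \<rho> \<mu> c r" "x \<in> cball c r" "y \<in> cball c r"
    "prox f \<mu> x = {p}" "prox f \<mu> y = {q}"
  shows "dist p q \<le> (1 / (1 - \<mu> * \<rho>)) * dist x y"
proof -
  obtain P where P: "\<forall>x\<in>cball c r. prox f \<mu> x = {P x}"
    "\<forall>x\<in>cball c r. \<forall>y\<in>cball c r. dist (P x) (P y) \<le> (1 / (1 - \<mu> * \<rho>)) * dist x y"
    using assms(1) unfolding standing_fact_on_def by blast
  have "P x = p" "P y = q" using P(1) assms by auto
  thus ?thesis using P(2) assms by auto
qed

lemma gderiv_unique: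
  assumes "GDERIV h x :> a" "GDERIV h x :> b" shows "a = b"
proof -
  have "(\<lambda>u. inner u a) = (\<lambda>u. inner u b)"
    using has_derivative_unique assms unfolding gderiv_def by blast
  hence "inner (a - b) a = inner (a - b) b" by metis
  hence "inner (a - b) (a - b) = 0" by (simp add: inner_diff_right)
  thus ?thesis by simp
qed

lemma fejer_alg:
  fixes u g :: "'a::real_inner"
  assumes "0 \<le> inner (u - (l - gm) *\<^sub>R g) g" "0 < gm" "2*gm < l"
  shows "norm (u - l *\<^sub>R g) \<le> norm u"
proof -
  have h: "(l - gm) * inner g g \<le> inner u g"
    using assms(1) by (simp add: inner_diff_left)
  have gg: "0 \<le> inner g g" by simp
  have "l * (l * inner g g - 2 * inner u g) \<le> 0"
  proof -
    have "l * inner g g - 2 * inner u g \<le> l * inner g g - 2 * ((l - gm) * inner g g)"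
      using h by linarith
    also have "\<dots> = (2*gm - l) * inner g g" by (simp add: algebra_simps)
    also have "\<dots> \<le> 0" using assms gg by (simp add: mult_nonpos_nonneg)
    finally show ?thesis using assms by (simp add: mult_nonneg_nonpos)
  qed
  hence "(norm (u - l *\<^sub>R g))\<^sup>2 \<le> (norm u)\<^sup>2"
    by (simp add: power2_norm_eq_inner inner_diff_left inner_diff_right algebra_simps inner_commute)
  thus ?thesis by (simp add: power2_le_iff_abs_le)
qed

lemma prox_le:
  assumes "p \<in> prox f \<mu> x"
  shows "f p + ereal ((norm (p - x))\<^sup>2 / (2 * \<mu>)) \<le> f w + ereal ((norm (w - x))\<^sup>2 / (2 * \<mu>))"
  using assms unfolding prox_def by blast


theorem theorem4p5:
  fixes f :: "'a::euclidean_space \<Rightarrow> ereal"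
    and \<rho> \<delta> \<beta> lambar :: real
    and xbar :: 'a
    and gam lam L \<sigma> \<kappa> :: "nat \<Rightarrow> real"
    and x z :: "nat \<Rightarrow> 'a"
  assumes proper: "proper_fun f"
    and lsc: "lsc_fun f"
    and bdd_below: "\<exists>m. \<forall>y. ereal m \<le> f y"
    and rho_pos: "\<rho> > 0"
    and wconv: "weakly_convex_on UNIV \<rho> f"
    and xbar_dom: "xbar \<in> edom f"
    and crit: "0 \<in> limiting_subdiff f xbar"
    and lambdabar_pos: "lambar > 0"
    and bdd_gamma: "bounded (range gam)"
    and bdd_lambda: "bounded (range lam)"
    and params: "\<And>k. lambar < 2 * gam k \<and> 2 * gam k < lam k \<and> lam k < 1 / \<rho>"
    and delta_pos: "\<delta> > 0"
    and sf_gamma: "\<And>k. standing_fact_on f \<rho> (gam k) xbar \<delta>"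
    and sf_lambda: "\<And>k. standing_fact_on f \<rho> (lam k) xbar \<delta>"
    and conv_gamma: "\<And>k. convex_on (cball xbar \<delta>) (menv f (gam k))"
    and conv_lambda: "\<And>k. convex_on (cball xbar \<delta>) (menv f (lam k))"
    and L_def: "\<And>k. L k = 1 + (lam k - gam k) / gam k * (1 + 1 / (1 - gam k * \<rho>))"
    and sigma: "\<And>k. 0 < \<sigma> k \<and> \<sigma> k < 2 / (L k)\<^sup>2"
    and kappa_def: "\<And>k. \<kappa> k = 1 - 2 * \<sigma> k + (\<sigma> k)\<^sup>2 * (L k)\<^sup>2"
    and beta_pos: "\<beta> > 0"
    and beta: "\<And>k. \<beta> < \<delta> \<and> \<beta> < \<delta> / \<sigma> k * (1 - sqrt (\<kappa> k))"
    and x0: "x 0 \<in> cball xbar \<beta>"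
    and step_a: "\<And>k. z k \<in> ball xbar \<delta> \<and>
        (\<exists>g. GDERIV (menv f (gam k)) (z k) :> g \<and> z k = x k - (lam k - gam k) *\<^sub>R g)"
    and step_b: "\<And>k. x (Suc k) = z k - (gam k / (lam k - gam k)) *\<^sub>R (x k - z k)"
  shows "(\<lambda>k. f (x k)) \<longlonglongrightarrow> (INF y\<in>cball xbar \<beta>. f y)
         \<and> (\<exists>xs. x \<longlonglongrightarrow> xs \<and> f xs = (INF y\<in>cball xbar \<beta>. f y))"
proof -
  let ?D = "limiting_subdiff f"
  obtain m where m: "\<And>y. ereal m \<le> f y" using bdd_below by blast
  have lamgam: "\<And>k. 0 < gam k \<and> gam k < lam k \<and> lambar < lam k \<and> lam k * \<rho> < 1"
  proof -
    fix k show "0 < gam k \<and> gam k < lam k \<and> lambar < lam k \<and> lam k * \<rho> < 1"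
    proof -
      have "lam k < 1 / \<rho>" using params[of k] by simp
      hence "lam k * \<rho> < 1" using rho_pos by (simp add: field_simps)
      thus ?thesis using params[of k] lambdabar_pos by auto
    qed
  qed
  have bd: "\<beta> < \<delta>" using beta[of 0] by simp
  have "\<forall>k. \<exists>gg. GDERIV (menv f (gam k)) (z k) :> gg \<and> z k = x k - (lam k - gam k) *\<^sub>R gg"
    using step_a by blast
  from choice[OF this] obtain g where g: "\<And>k. GDERIV (menv f (gam k)) (z k) :> g k \<and> z k = x k - (lam k - gam k) *\<^sub>R g k"
    by blast
  have S1: "prox f (gam k) (z k) = {x (Suc k)} \<and> g k \<in> ?D (x (Suc k))
      \<and> x k - x (Suc k) = lam k *\<^sub>R g k" for k
  proof -
    have zc: "z k \<in> cball xbar \<delta>" using step_a[of k] by auto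
    obtain p where p: "prox f (gam k) (z k) = {p}"
      "GDERIV (menv f (gam k)) (z k) :> (1/gam k) *\<^sub>R (z k - p)"
      "prox f (gam k) (z k) = {q. (1/gam k) *\<^sub>R (z k - q) \<in> ?D q}"
      using sf_point[OF sf_gamma zc] by blast
    have ge: "g k = (1/gam k) *\<^sub>R (z k - p)" using gderiv_unique g p(2) by blast
    have gk: "0 < gam k" "gam k < lam k" using lamgam[of k] by auto
    have zp: "z k - p = gam k *\<^sub>R g k" using ge gk by simp
    have xz: "x k - z k = (lam k - gam k) *\<^sub>R g k" using g[of k] by simp
    have "x (Suc k) = z k - (gam k / (lam k - gam k)) *\<^sub>R ((lam k - gam k) *\<^sub>R g k)"
      using step_b[of k] xz by simp
    also have "\<dots> = z k - gam k *\<^sub>R g k" using gk by simp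
    also have "\<dots> = p" using zp by (simp add: algebra_simps)
    finally have xp: "x (Suc k) = p" .
    have "p \<in> prox f (gam k) (z k)" using p(1) by simp
    hence "g k \<in> ?D p" using p(3) ge by simp
    moreover have "x k - p = lam k *\<^sub>R g k"
    proof -
      have "x k - p = (x k - z k) + (z k - p)" by simp
      also have "\<dots> = lam k *\<^sub>R g k" using xz zp by (simp add: algebra_simps)
      finally show ?thesis .
    qed
    ultimately show ?thesis using xp p(1) by simp
  qed
  have crit0: "GDERIV (menv f \<mu>) y :> 0"
    if sf: "standing_fact_on f \<rho> \<mu> xbar \<delta>" and y: "y \<in> cball xbar \<delta>" and cy: "0 \<in> ?D y"
      and mu: "\<mu> > 0" for y \<mu>
  proof -
    obtain p where p: "prox f \<mu> y = {p}"
      "GDERIV (menv f \<mu>) y :> (1/\<mu>) *\<^sub>R (y - p)"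
      "prox f \<mu> y = {q. (1/\<mu>) *\<^sub>R (y - q) \<in> ?D q}"
      using sf_point[OF sf y] by blast
    have "y \<in> prox f \<mu> y" using p(3) cy by simp
    hence "p = y" using p(1) by simp
    thus ?thesis using p(2) by simp
  qed
  have S2: "norm (x (Suc k) - y) \<le> norm (x k - y)"
    if y: "y \<in> cball xbar \<delta>" and cy: "0 \<in> ?D y" for y k
  proof -
    have gk: "0 < gam k" "2 * gam k < lam k" using lamgam[of k] params[of k] by auto
    have zc: "z k \<in> cball xbar \<delta>" using step_a[of k] by auto
    have d0: "GDERIV (menv f (gam k)) y :> 0" using crit0[OF sf_gamma y cy gk(1)] .
    have t1: "menv f (gam k) y + inner (z k - y) 0 \<le> menv f (gam k) (z k)"
      by (rule tangent_ineq[OF conv_gamma y zc d0[unfolded gderiv_def]])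
    have t2: "menv f (gam k) (z k) + inner (y - z k) (g k) \<le> menv f (gam k) y"
      by (rule tangent_ineq[OF conv_gamma zc y g[of k, THEN conjunct1, unfolded gderiv_def]])
    have "0 \<le> inner (z k - y) (g k)" using t1 t2 by (smt (verit) inner_commute inner_minus_left minus_diff_eq inner_zero_right)
    moreover have "z k - y = (x k - y) - (lam k - gam k) *\<^sub>R g k" using g[of k] by simp
    ultimately have "0 \<le> inner ((x k - y) - (lam k - gam k) *\<^sub>R g k) (g k)" by simp
    from fejer_alg[OF this gk]
    have A: "norm ((x k - y) - lam k *\<^sub>R g k) \<le> norm (x k - y)" .
    have B: "x (Suc k) - y = (x k - y) - lam k *\<^sub>R g k" 
    proof -
      have e: "x k - x (Suc k) = lam k *\<^sub>R g k" using S1[of k] by blast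
      have "x (Suc k) - y = (x k - y) - (x k - x (Suc k))" by simp
      thus ?thesis unfolding e .
    qed
    show ?thesis unfolding B using A .
  qed
  have S3: "x k \<in> cball xbar \<beta>" for k
  proof (induction k)
    case 0 then show ?case using x0 .
  next
    case (Suc k)
    have "norm (x (Suc k) - xbar) \<le> norm (x k - xbar)"
      using S2[of xbar k] crit delta_pos by simp
    thus ?case using Suc by (simp add: dist_norm norm_minus_commute)
  qed
  have S3d: "x k \<in> cball xbar \<delta>" for k using S3[of k] bd by auto
  have S4: "x (Suc k) \<in> prox f (lam k) (x k)" for k
  proof -
    obtain p where p: "prox f (lam k) (x k) = {p}"
      "prox f (lam k) (x k) = {q. (1/lam k) *\<^sub>R (x k - q) \<in> ?D q}"
      using sf_point[OF sf_lambda S3d] by blast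
    have "(1/lam k) *\<^sub>R (x k - x (Suc k)) = g k" using S1[of k] lamgam[of k] by simp
    thus ?thesis using p(2) S1[of k] by simp
  qed
  have mu_pos: "0 < lam k" "0 < gam k" for k using lamgam[of k] by auto
  have fxbar: "f xbar < \<infinity>" using xbar_dom unfolding edom_def by simp
  have notm: "f y \<noteq> -\<infinity>" for y using proper unfolding proper_fun_def by blast
  have prox_drop: "f p \<le> f w + ereal ((norm (w - u))\<^sup>2 / (2 * \<mu>))"
    if "p \<in> prox f \<mu> u" "0 < \<mu>" for p u w \<mu>
  proof -
    have "f p \<le> f p + ereal ((norm (p - u))\<^sup>2 / (2 * \<mu>))"
      using that by (intro ereal_le_add_self) simp
    also have "\<dots> \<le> f w + ereal ((norm (w - u))\<^sup>2 / (2 * \<mu>))" using prox_le[OF that(1)] .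
    finally show ?thesis .
  qed
  have fin: "f (x (Suc k)) < \<infinity>" for k
  proof -
    have "f (x (Suc k)) \<le> f xbar + ereal ((norm (xbar - x k))\<^sup>2 / (2 * lam k))"
      using prox_drop[OF S4 mu_pos(1)] .
    also have "\<dots> < \<infinity>" using fxbar by simp
    finally show ?thesis .
  qed
  define a where "a k = real_of_ereal (f (x (Suc k)))" for k
  have fa: "f (x (Suc k)) = ereal (a k)" for k
    using fin[of k] notm[of "x (Suc k)"] unfolding a_def by (cases "f (x (Suc k))") auto
  have am: "m \<le> a k" for k using m[of "x (Suc k)"] fa[of k] by simp
  have desc: "a (Suc k) + (norm (x (Suc (Suc k)) - x (Suc k)))\<^sup>2 / (2 * lam (Suc k)) \<le> a k" for k
  proof -
    have "f (x (Suc (Suc k))) + ereal ((norm (x (Suc (Suc k)) - x (Suc k)))\<^sup>2 / (2 * lam (Suc k)))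
        \<le> f (x (Suc k)) + ereal ((norm (x (Suc k) - x (Suc k)))\<^sup>2 / (2 * lam (Suc k)))"
      using prox_le[OF S4[of "Suc k"]] .
    thus ?thesis unfolding fa by simp
  qed
  have "decseq a"
  proof (rule decseq_SucI)
    fix k
    have "0 \<le> (norm (x (Suc (Suc k)) - x (Suc k)))\<^sup>2 / (2 * lam (Suc k))"
      using mu_pos(1)[of "Suc k"] by simp
    thus "a (Suc k) \<le> a k" using desc[of k] by linarith
  qed
  then obtain A where aA: "a \<longlonglongrightarrow> A" using decseq_convergent[of a m] am by blast
  have ad: "(\<lambda>k. a k - a (Suc k)) \<longlonglongrightarrow> 0"
  proof -
    have "(\<lambda>k. a k - a (Suc k)) \<longlonglongrightarrow> A - A"
      by (intro tendsto_diff aA LIMSEQ_Suc)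
    thus ?thesis by simp
  qed
  define dx where "dx k = norm (x (Suc (Suc k)) - x (Suc k))" for k
  have dx2: "(dx k)\<^sup>2 \<le> (2 / \<rho>) * (a k - a (Suc k))" for k
  proof -
    have l: "0 < lam (Suc k)" "lam (Suc k) * \<rho> < 1" using lamgam[of "Suc k"] by auto
    have "(dx k)\<^sup>2 / (2 * lam (Suc k)) \<le> a k - a (Suc k)" using desc[of k] unfolding dx_def by linarith
    hence "(dx k)\<^sup>2 \<le> 2 * lam (Suc k) * (a k - a (Suc k))" using l by (simp add: field_simps)
    also have "\<dots> \<le> (2 / \<rho>) * (a k - a (Suc k))"
    proof (rule mult_right_mono)
      show "2 * lam (Suc k) \<le> 2 / \<rho>" using l rho_pos by (simp add: field_simps)
      show "0 \<le> a k - a (Suc k)" using desc[of k] l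
        by (smt (verit) divide_nonneg_pos zero_le_power2)
    qed
    finally show ?thesis .
  qed
  have dx0: "dx \<longlonglongrightarrow> 0"
  proof -
    have "(\<lambda>k. (dx k)\<^sup>2) \<longlonglongrightarrow> 0"
    proof (rule tendsto_sandwich[of "\<lambda>k. 0" _ _ "\<lambda>k. (2 / \<rho>) * (a k - a (Suc k))"])
      show "\<forall>\<^sub>F n in sequentially. 0 \<le> (dx n)\<^sup>2" by simp
      show "\<forall>\<^sub>F n in sequentially. (dx n)\<^sup>2 \<le> 2 / \<rho> * (a n - a (Suc n))" using dx2 by simp
      show "(\<lambda>k. 0::real) \<longlonglongrightarrow> 0" by simp
      show "(\<lambda>k. 2 / \<rho> * (a k - a (Suc k))) \<longlonglongrightarrow> 0"
        using tendsto_mult_left[OF ad, of "2/\<rho>"] by simp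
    qed
    hence "(\<lambda>k. sqrt ((dx k)\<^sup>2)) \<longlonglongrightarrow> sqrt 0" by (rule tendsto_real_sqrt)
    moreover have "(\<lambda>k. sqrt ((dx k)\<^sup>2)) = dx" by (simp add: dx_def fun_eq_iff)
    ultimately show ?thesis by simp
  qed
  have g0: "g \<longlonglongrightarrow> 0"
  proof -
    have "(\<lambda>k. g (Suc k)) \<longlonglongrightarrow> 0"
    proof (rule tendsto_norm_zero_iff[THEN iffD1], rule tendsto_sandwich[of "\<lambda>k. 0" _ _ "\<lambda>k. dx k / lambar"])
      show "\<forall>\<^sub>F n in sequentially. 0 \<le> norm (g (Suc n))" by simp
      show "\<forall>\<^sub>F n in sequentially. norm (g (Suc n)) \<le> dx n / lambar"
      proof (rule always_eventually, rule allI)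
        fix n
        have l: "lambar < lam (Suc n)" using lamgam[of "Suc n"] by auto
        have "x (Suc n) - x (Suc (Suc n)) = lam (Suc n) *\<^sub>R g (Suc n)" using S1[of "Suc n"] by blast
        hence "dx n = lam (Suc n) * norm (g (Suc n))" unfolding dx_def using l lambdabar_pos
          by (metis abs_of_pos less_trans norm_minus_commute norm_scaleR)
        moreover have "lambar * norm (g (Suc n)) \<le> lam (Suc n) * norm (g (Suc n))"
          using l by (intro mult_right_mono) auto
        ultimately show "norm (g (Suc n)) \<le> dx n / lambar" using lambdabar_pos
          by (simp add: field_simps)
      qed
      show "(\<lambda>k. 0::real) \<longlonglongrightarrow> 0" by simp
      show "(\<lambda>k. dx k / lambar) \<longlonglongrightarrow> 0" using tendsto_divide_zero[OF dx0] by simp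
    qed
    thus ?thesis by (rule LIMSEQ_imp_Suc)
  qed
  have "seq_compact (cball xbar \<beta>)" by (intro compact_imp_seq_compact compact_cball)
  then obtain xs r where xs: "xs \<in> cball xbar \<beta>" "strict_mono r" "((\<lambda>k. x (Suc k)) \<circ> r) \<longlonglongrightarrow> xs"
    using seq_compactE[of "cball xbar \<beta>" "\<lambda>k. x (Suc k)"] S3 by metis
  have xsr: "(\<lambda>n. x (Suc (r n))) \<longlonglongrightarrow> xs" using xs(3) by (simp add: o_def)
  have xsd: "xs \<in> ball xbar \<delta>" using xs(1) bd by auto
  hence xsc: "xs \<in> cball xbar \<delta>" by auto
  have cxs: "0 \<in> ?D xs"
  proof -
    obtain P0 where P0: "prox f (gam 0) xs = {P0}"
      "prox f (gam 0) xs = {q. (1/gam 0) *\<^sub>R (xs - q) \<in> ?D q}"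
      using sf_point[OF sf_gamma xsc] by blast
    define w where "w n = x (Suc (r n)) + gam 0 *\<^sub>R g (r n)" for n
    have gr: "(\<lambda>n. g (r n)) \<longlonglongrightarrow> 0" using LIMSEQ_subseq_LIMSEQ[OF g0 xs(2)] by (simp add: o_def)
    have wl: "w \<longlonglongrightarrow> xs + gam 0 *\<^sub>R 0" unfolding w_def
      by (intro tendsto_add xsr tendsto_scaleR tendsto_const gr)
    hence wl': "w \<longlonglongrightarrow> xs" by simp
    have evw: "eventually (\<lambda>n. w n \<in> ball xbar \<delta>) sequentially"
      using topological_tendstoD[OF wl' open_ball xsd] .
    define C where "C = 1 / (1 - gam 0 * \<rho>)"
    have "((\<lambda>n. C * dist xs (w n) + dist (x (Suc (r n))) xs) \<longlongrightarrow> C * dist xs xs + dist xs xs) sequentially"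
      by (intro tendsto_intros wl' xsr)
    hence el: "(\<lambda>n. C * dist xs (w n) + dist (x (Suc (r n))) xs) \<longlonglongrightarrow> 0" by simp
    have ev: "eventually (\<lambda>n. dist P0 xs \<le> C * dist xs (w n) + dist (x (Suc (r n))) xs) sequentially"
      using evw
    proof eventually_elim
      case (elim n)
      hence wc: "w n \<in> cball xbar \<delta>" by auto
      obtain q where q: "prox f (gam 0) (w n) = {q}"
        "prox f (gam 0) (w n) = {q'. (1/gam 0) *\<^sub>R (w n - q') \<in> ?D q'}"
        using sf_point[OF sf_gamma wc] by blast
      have "(1/gam 0) *\<^sub>R (w n - x (Suc (r n))) = g (r n)" unfolding w_def using mu_pos(2)[of 0] by simp
      hence "x (Suc (r n)) \<in> prox f (gam 0) (w n)" using q(2) S1[of "r n"] by simp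
      hence qx: "q = x (Suc (r n))" using q(1) by simp
      have "dist P0 q \<le> C * dist xs (w n)" unfolding C_def using sf_lip[OF sf_gamma xsc wc P0(1) q(1)] .
      thus ?case using qx dist_triangle[of P0 xs q] by (simp add: dist_commute)
    qed
    have "dist P0 xs \<le> 0" by (rule tendsto_lowerbound[OF el ev]) simp
    hence "P0 = xs" by simp
    hence "xs \<in> prox f (gam 0) xs" using P0(1) by simp
    thus ?thesis using P0(2) by simp
  qed
  define d where "d k = norm (x k - xs)" for k
  have "decseq d" unfolding d_def by (rule decseq_SucI) (rule S2[OF xsc cxs])
  then obtain l where dl: "d \<longlonglongrightarrow> l" using decseq_convergent[of d 0] unfolding d_def by auto
  have "((\<lambda>k. d (Suc k)) \<circ> r) \<longlonglongrightarrow> l" by (intro LIMSEQ_subseq_LIMSEQ LIMSEQ_Suc dl xs(2))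
  moreover have "((\<lambda>k. d (Suc k)) \<circ> r) \<longlonglongrightarrow> 0"
  proof -
    have "(\<lambda>n. x (Suc (r n)) - xs) \<longlonglongrightarrow> xs - xs" by (intro tendsto_diff xsr tendsto_const)
    hence "(\<lambda>n. norm (x (Suc (r n)) - xs)) \<longlonglongrightarrow> 0" using tendsto_norm_zero_iff by force
    thus ?thesis by (simp add: d_def o_def)
  qed
  ultimately have "l = 0" using LIMSEQ_unique by blast
  hence "(\<lambda>k. norm (x k - xs)) \<longlonglongrightarrow> 0" using dl unfolding d_def by simp
  hence "(\<lambda>k. x k - xs) \<longlonglongrightarrow> 0" using tendsto_norm_zero_iff by blast
  hence xconv: "x \<longlonglongrightarrow> xs" by (rule LIM_zero_cancel)
  have pxs: "xs \<in> prox f (gam 0) xs"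
  proof -
    obtain P0 where P0: "prox f (gam 0) xs = {P0}"
      "prox f (gam 0) xs = {q. (1/gam 0) *\<^sub>R (xs - q) \<in> ?D q}"
      using sf_point[OF sf_gamma xsc] by blast
    show ?thesis using P0(2) cxs by simp
  qed
  have menv_lb: "ereal m \<le> moreau_env f (gam 0) u" for u
    unfolding moreau_env_def
  proof (rule INF_greatest)
    fix y
    have "ereal m \<le> f y" by (rule m)
    also have "\<dots> \<le> f y + ereal ((norm (y - u))\<^sup>2 / (2 * gam 0))"
      using mu_pos(2)[of 0] by (intro ereal_le_add_self) simp
    finally show "ereal m \<le> f y + ereal ((norm (y - u))\<^sup>2 / (2 * gam 0))" .
  qed
  have menv_ub: "moreau_env f (gam 0) u \<le> f u" for u
    unfolding moreau_env_def by (rule INF_lower2[of u]) simp_all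
  have menv_xs: "moreau_env f (gam 0) xs = f xs"
  proof (rule antisym[OF menv_ub])
    show "f xs \<le> moreau_env f (gam 0) xs" unfolding moreau_env_def
    proof (rule INF_greatest)
      fix y show "f xs \<le> f y + ereal ((norm (y - xs))\<^sup>2 / (2 * gam 0))"
        using prox_le[OF pxs, of y] by simp
    qed
  qed
  have fxs_fin: "f xs < \<infinity>"
  proof -
    have "f xs \<le> f xbar + ereal ((norm (xbar - xs))\<^sup>2 / (2 * gam 0))"
      using prox_drop[OF pxs mu_pos(2)] .
    also have "\<dots> < \<infinity>" using fxbar by simp
    finally show ?thesis .
  qed
  obtain c where fc: "f xs = ereal c"
    using fxs_fin notm[of xs] by (cases "f xs") auto
  have minim: "f xs \<le> f y" if y: "y \<in> cball xbar \<delta>" for y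
  proof (cases "f y = \<infinity>")
    case True thus ?thesis by simp
  next
    case False
    have mfin: "moreau_env f (gam 0) y \<noteq> \<infinity>" "moreau_env f (gam 0) y \<noteq> -\<infinity>"
      using menv_ub[of y] menv_lb[of y] False by auto
    then obtain e where e: "moreau_env f (gam 0) y = ereal e" by (cases "moreau_env f (gam 0) y") auto
    have d0: "GDERIV (menv f (gam 0)) xs :> 0" using crit0[OF sf_gamma xsc cxs mu_pos(2)] .
    have "menv f (gam 0) xs + inner (y - xs) 0 \<le> menv f (gam 0) y"
      by (rule tangent_ineq[OF conv_gamma xsc y d0[unfolded gderiv_def]])
    hence "c \<le> e" using menv_xs fc e unfolding menv_def by simp
    hence "f xs \<le> moreau_env f (gam 0) y" using fc e by simp
    thus ?thesis using menv_ub[of y] by (rule order_trans)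
  qed
  have infeq: "(INF y\<in>cball xbar \<beta>. f y) = f xs"
  proof (rule antisym)
    show "(INF y\<in>cball xbar \<beta>. f y) \<le> f xs" using xs(1) by (rule INF_lower)
    show "f xs \<le> (INF y\<in>cball xbar \<beta>. f y)"
      using minim bd by (intro INF_greatest) auto
  qed
  have fconv: "(\<lambda>k. f (x (Suc k))) \<longlonglongrightarrow> f xs"
  proof (rule tendsto_sandwich[of "\<lambda>k. ereal c" _ _ "\<lambda>k. ereal (c + (norm (xs - x k))\<^sup>2 / (2 * lambar))"])
    show "\<forall>\<^sub>F n in sequentially. ereal c \<le> f (x (Suc n))"
      using minim S3d fc by (intro always_eventually) auto
    show "\<forall>\<^sub>F n in sequentially. f (x (Suc n)) \<le> ereal (c + (norm (xs - x n))\<^sup>2 / (2 * lambar))"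
    proof (rule always_eventually, rule allI)
      fix n
      have l: "lambar < lam n" using lamgam[of n] by auto
      have "(norm (xs - x n))\<^sup>2 / (2 * lam n) \<le> (norm (xs - x n))\<^sup>2 / (2 * lambar)"
        using l lambdabar_pos by (intro divide_left_mono) auto
      hence "f xs + ereal ((norm (xs - x n))\<^sup>2 / (2 * lam n)) \<le> ereal (c + (norm (xs - x n))\<^sup>2 / (2 * lambar))"
        using fc by simp
      thus "f (x (Suc n)) \<le> ereal (c + (norm (xs - x n))\<^sup>2 / (2 * lambar))"
        by (rule order_trans[OF prox_drop[OF S4 mu_pos(1), of n xs]])
    qed
    show "(\<lambda>k. ereal c) \<longlonglongrightarrow> f xs" using fc by simp
    have "(\<lambda>k. x k - xs) \<longlonglongrightarrow> xs - xs" by (intro tendsto_diff xconv tendsto_const)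
    hence "(\<lambda>k. x k - xs) \<longlonglongrightarrow> 0" by simp
    hence "(\<lambda>k. norm (x k - xs)) \<longlonglongrightarrow> 0" by (rule tendsto_norm_zero)
    hence "(\<lambda>k. norm (xs - x k)) \<longlonglongrightarrow> 0" by (simp add: norm_minus_commute)
    hence "(\<lambda>k. c + (norm (xs - x k))\<^sup>2 / (2 * lambar)) \<longlonglongrightarrow> c + 0\<^sup>2 / (2 * lambar)"
      using lambdabar_pos by (intro tendsto_intros) auto
    hence "(\<lambda>k. ereal (c + (norm (xs - x k))\<^sup>2 / (2 * lambar))) \<longlonglongrightarrow> ereal c"
      by (simp add: lim_ereal)
    thus "(\<lambda>k. ereal (c + (norm (xs - x k))\<^sup>2 / (2 * lambar))) \<longlonglongrightarrow> f xs" using fc by simp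
  qed
  show ?thesis
    using LIMSEQ_imp_Suc[OF fconv] xconv infeq by auto
qed

end
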